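(* Let $\beta\in(1,3/2]$. The restriction $\varphi'=\varphi|_Z:Z\to D$ is a bijection which is measurable with measurable inverse.
   Context: $\vec q_0=(0,0)$, $\vec q_1=(1,0)$, $\vec q_2=(0,1)$; $S_\beta$ is the attractor of the IFS $f_{\vec q_i}(\vec z)=(\vec z+\vec q_i)/\beta$ (for $1<\beta\le3/2$ the closed triangle with vertices $(0,0)$, $(\frac1{\beta-1},0)$, $(0,\frac1{\beta-1})$), with Borel $\sigma$-algebra. Subsets of $S_\beta$: $E_0=[0,\frac1\beta)\times[0,\frac1\beta)$; $E_1=\{0\le y<\frac1\beta,\ \frac{1}{\beta(\beta-1)}<x+y\le\frac{1}{\beta-1}\}$; $E_2=\{0\le x<\frac1\beta,\ \frac{1}{\beta(\beta-1)}<x+y\le\frac{1}{\beta-1}\}$; $C_{01}=\{x\ge\frac1\beta,\ 0\le y<\frac1\beta,\ x+y\le\frac{1}{\beta(\beta-1)}\}$; $C_{12}=\{x\ge\frac1\beta,\ y\ge\frac1\beta,\ \frac{1}{\beta(\beta-1)}<x+y\le\frac{1}{\beta-1}\}$; $C_{02}=\{0\le x<\frac1\beta,\ y\ge\frac1\beta,\ x+y\le\frac{1}{\beta(\beta-1)}\}$; $C_{012}=\{x\ge\frac1\beta,\ y\ge\frac1\beta,\ x+y\le\frac{1}{\beta(\beta-1)}\}$; $C=C_{01}\cup C_{12}\cup C_{02}$. $\Omega=\{0,1\}^{\mathbb N}$, $\Upsilon=\{0,1,2\}^{\mathbb N}$ with product $\sigma$-algebras and left shifts $\sigma,\sigma'$.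 $K_\beta$ on $\Omega\times\Upsilon\times S_\beta$: $K_\beta(\omega,\upsilon,\vec z)=(\omega,\upsilon,\beta\vec z-\vec q_i)$ if $\vec z\in E_i$; $(\sigma\omega,\upsilon,\beta\vec z-\vec q_i)$ if $\omega_1=0$, $\vec z\in C_{ij}$ ($ij\in\{01,12,02\}$); $(\sigma\omega,\upsilon,\beta\vec z-\vec q_j)$ if $\omega_1=1$, $\vec z\in C_{ij}$; $(\omega,\sigma'\upsilon,\beta\vec z-\vec q_i)$ if $\vec z\in C_{012}$, $\upsilon_1=i$. The digit $d_1(\omega,\upsilon,\vec z)$ is the vector subtracted, $d_n=d_1\circ K_\beta^{n-1}$. Define $\varphi:\Omega\times\Upsilon\times S_\beta\to\Upsilon$ by $\varphi(\omega,\upsilon,\vec z)=(b_1,b_2,\ldots)$ where $d_n(\omega,\upsilon,\vec z)=\vec q_{b_n}$. Let $Z$ be the set of $(\omega,\upsilon,\vec z)$ such that $K_\beta^n(\omega,\upsilon,\vec z)\in\Omega\times\Upsilon\times C$ for infinitely many $n$ and $K_\beta^n(\omega,\upsilon,\vec z)\in\Omega\times\Upsilon\times C_{012}$ for infinitely many $n$. Let $D$ be the set of $(b_1,b_2,\ldots)\in\Upsilon$ such that $\sum_{i\ge1}\vec q_{b_{j+i-1}}\beta^{-i}\in C$ for infinitely many $j$ and $\sum_{i\ge1}\vec q_{b_{j+i-1}}\beta^{-i}\in C_{012}$ for infinitely many $j$. (One has $\varphi(Z)=D$.) *)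

theory Defs
  imports "HOL-Probability.Probability"
begin

text \<open>Sequences in Omega = {0,1}^N and
  Upsilon = {0,1,2}^N are functions nat => nat with values in {0,1} resp. {0,1,2};
  indexing is 0-based, so omega_1 of the paper is omega 0.\<close>

definition qv :: "nat \<Rightarrow> real \<times> real" where
  "qv i = (if i = 1 then (1, 0) else if i = 2 then (0, 1) else (0, 0))"

text \<open>S_beta: for 1 < beta <= 3/2 the attractor is the closed triangle (as stated in the paper).\<close>
definition S :: "real \<Rightarrow> (real \<times> real) set" where
  "S \<beta> = {(x, y). 0 \<le> x \<and> 0 \<le> y \<and> x + y \<le> 1 / (\<beta> - 1)}"

definition E0 :: "real \<Rightarrow> (real \<times> real) set" where
  "E0 \<beta> = S \<beta> \<inter> {(x, y). 0 \<le> x \<and> x < 1/\<beta> \<and> 0 \<le> y \<and> y < 1/\<beta>}"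
definition E1 :: "real \<Rightarrow> (real \<times> real) set" where
  "E1 \<beta> = S \<beta> \<inter> {(x, y). 0 \<le> y \<and> y < 1/\<beta> \<and> 1/(\<beta>*(\<beta>-1)) < x + y \<and> x + y \<le> 1/(\<beta>-1)}"
definition E2 :: "real \<Rightarrow> (real \<times> real) set" where
  "E2 \<beta> = S \<beta> \<inter> {(x, y). 0 \<le> x \<and> x < 1/\<beta> \<and> 1/(\<beta>*(\<beta>-1)) < x + y \<and> x + y \<le> 1/(\<beta>-1)}"
definition C01 :: "real \<Rightarrow> (real \<times> real) set" where
  "C01 \<beta> = S \<beta> \<inter> {(x, y). x \<ge> 1/\<beta> \<and> 0 \<le> y \<and> y < 1/\<beta> \<and> x + y \<le> 1/(\<beta>*(\<beta>-1))}"
definition C12 :: "real \<Rightarrow> (real \<times> real) set" where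
  "C12 \<beta> = S \<beta> \<inter> {(x, y). x \<ge> 1/\<beta> \<and> y \<ge> 1/\<beta> \<and> 1/(\<beta>*(\<beta>-1)) < x + y \<and> x + y \<le> 1/(\<beta>-1)}"
definition C02 :: "real \<Rightarrow> (real \<times> real) set" where
  "C02 \<beta> = S \<beta> \<inter> {(x, y). 0 \<le> x \<and> x < 1/\<beta> \<and> y \<ge> 1/\<beta> \<and> x + y \<le> 1/(\<beta>*(\<beta>-1))}"
definition C012 :: "real \<Rightarrow> (real \<times> real) set" where
  "C012 \<beta> = S \<beta> \<inter> {(x, y). x \<ge> 1/\<beta> \<and> y \<ge> 1/\<beta> \<and> x + y \<le> 1/(\<beta>*(\<beta>-1))}"
definition Cs :: "real \<Rightarrow> (real \<times> real) set" where
  "Cs \<beta> = C01 \<beta> \<union> C12 \<beta> \<union> C02 \<beta>"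

text \<open>Index of the digit d_1: d_1(omega,upsilon,z) = qv (digit beta (omega,upsilon,z)).\<close>
definition digit :: "real \<Rightarrow> (nat \<Rightarrow> nat) \<times> (nat \<Rightarrow> nat) \<times> (real \<times> real) \<Rightarrow> nat" where
  "digit \<beta> p = (case p of (\<omega>, \<upsilon>, z) \<Rightarrow>
     if z \<in> E0 \<beta> then 0
     else if z \<in> E1 \<beta> then 1
     else if z \<in> E2 \<beta> then 2
     else if z \<in> C01 \<beta> then (if \<omega> 0 = 0 then 0 else 1)
     else if z \<in> C12 \<beta> then (if \<omega> 0 = 0 then 1 else 2)
     else if z \<in> C02 \<beta> then (if \<omega> 0 = 0 then 0 else 2)
     else \<upsilon> 0)"

definition shift :: "(nat \<Rightarrow> nat) \<Rightarrow> (nat \<Rightarrow> nat)" where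
  "shift s = (\<lambda>n. s (Suc n))"

definition K :: "real \<Rightarrow> (nat \<Rightarrow> nat) \<times> (nat \<Rightarrow> nat) \<times> (real \<times> real)
                     \<Rightarrow> (nat \<Rightarrow> nat) \<times> (nat \<Rightarrow> nat) \<times> (real \<times> real)" where
  "K \<beta> p = (case p of (\<omega>, \<upsilon>, z) \<Rightarrow>
     (if z \<in> Cs \<beta> then shift \<omega> else \<omega>,
      if z \<in> C012 \<beta> then shift \<upsilon> else \<upsilon>,
      \<beta> *\<^sub>R z - qv (digit \<beta> p)))"

text \<open>phi: the sequence of digit indices; b_(n+1) (paper) = phi beta p n.\<close>
definition phi :: "real \<Rightarrow> (nat \<Rightarrow> nat) \<times> (nat \<Rightarrow> nat) \<times> (real \<times> real) \<Rightarrow> (nat \<Rightarrow> nat)" where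
  "phi \<beta> p = (\<lambda>n. digit \<beta> ((K \<beta> ^^ n) p))"

definition Omega_M :: "(nat \<Rightarrow> nat) measure" where
  "Omega_M = PiM UNIV (\<lambda>_. count_space {0, 1})"

definition Upsilon_M :: "(nat \<Rightarrow> nat) measure" where
  "Upsilon_M = PiM UNIV (\<lambda>_. count_space {0, 1, 2})"

definition S_M :: "real \<Rightarrow> (real \<times> real) measure" where
  "S_M \<beta> = restrict_space borel (S \<beta>)"

definition X_M :: "real \<Rightarrow> ((nat \<Rightarrow> nat) \<times> (nat \<Rightarrow> nat) \<times> (real \<times> real)) measure" where
  "X_M \<beta> = Omega_M \<Otimes>\<^sub>M (Upsilon_M \<Otimes>\<^sub>M S_M \<beta>)"

definition Z :: "real \<Rightarrow> ((nat \<Rightarrow> nat) \<times> (nat \<Rightarrow> nat) \<times> (real \<times> real)) set" where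
  "Z \<beta> = {p \<in> space (X_M \<beta>).
            (\<exists>\<^sub>\<infinity> n. snd (snd ((K \<beta> ^^ n) p)) \<in> Cs \<beta>) \<and>
            (\<exists>\<^sub>\<infinity> n. snd (snd ((K \<beta> ^^ n) p)) \<in> C012 \<beta>)}"

definition D :: "real \<Rightarrow> (nat \<Rightarrow> nat) set" where
  "D \<beta> = {b \<in> space Upsilon_M.
            (\<exists>\<^sub>\<infinity> j. (\<Sum>i. (1 / \<beta> ^ Suc i) *\<^sub>R qv (b (j + i))) \<in> Cs \<beta>) \<and>
            (\<exists>\<^sub>\<infinity> j. (\<Sum>i. (1 / \<beta> ^ Suc i) *\<^sub>R qv (b (j + i))) \<in> C012 \<beta>)}"

end

theory Submission
  imports Defs
begin



lemma beta_facts: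
  fixes \<beta> :: real assumes "1 < \<beta>" "\<beta> \<le> 3/2"
  shows "\<beta> * (1/\<beta>) = 1" "\<beta> * (1/(\<beta>*(\<beta>-1))) = 1/(\<beta>-1)" "2 \<le> 1/(\<beta>-1)"
    "1/\<beta> > 0" "1/(\<beta>*(\<beta>-1)) > 0" "\<beta> * (1/(\<beta>-1)) - 1 = 1/(\<beta>-1)"
proof -
  show "\<beta> * (1/\<beta>) = 1" using assms by simp
  show "\<beta> * (1/(\<beta>*(\<beta>-1))) = 1/(\<beta>-1)" using assms by simp
  show "2 \<le> 1/(\<beta>-1)" using assms by (simp add: le_divide_eq)
  show "1/\<beta> > 0" "1/(\<beta>*(\<beta>-1)) > 0" using assms by auto
  show "\<beta> * (1/(\<beta>-1)) - 1 = 1/(\<beta>-1)" using assms by (simp add: field_simps)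
qed

lemma regions_cover:
  fixes \<beta> :: real assumes "z \<in> S \<beta>"
  shows "z \<in> E0 \<beta> \<or> z \<in> E1 \<beta> \<or> z \<in> E2 \<beta> \<or> z \<in> C01 \<beta> \<or> z \<in> C12 \<beta> \<or> z \<in> C02 \<beta> \<or> z \<in> C012 \<beta>"
proof -
  obtain x y where z: "z = (x, y)" by (cases z)
  have s: "0 \<le> x" "0 \<le> y" using assms z by (auto simp: S_def)
  consider "x < 1/\<beta>" | "x \<ge> 1/\<beta>" by linarith
  moreover consider "y < 1/\<beta>" | "y \<ge> 1/\<beta>" by linarith
  moreover consider "x + y \<le> 1/(\<beta>*(\<beta>-1))" | "x + y > 1/(\<beta>*(\<beta>-1))" by linarith
  ultimately show ?thesis using assms s unfolding z E0_def E1_def E2_def C01_def C12_def C02_def C012_def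
    by (smt (verit) Int_iff S_def case_prod_conv mem_Collect_eq)
qed
lemma step_S:
  fixes \<beta> :: real assumes b: "1 < \<beta>" "\<beta> \<le> 3/2" and z: "z \<in> S \<beta>"
  shows "\<beta> *\<^sub>R z - qv (digit \<beta> (\<omega>, \<upsilon>, z)) \<in> S \<beta>"
proof -
  obtain x y where zxy: "z = (x, y)" by (cases z)
  note f = beta_facts[OF b]
  have x0: "0 \<le> x" and y0: "0 \<le> y" and sxy: "x + y \<le> 1/(\<beta>-1)" using z zxy by (auto simp: S_def)
  have bx: "\<beta> * x \<ge> 1" if "x \<ge> 1/\<beta>"
    using mult_left_mono[OF that, of \<beta>] f b by simp
  have by': "\<beta> * y \<ge> 1" if "y \<ge> 1/\<beta>"
    using mult_left_mono[OF that, of \<beta>] f b by simp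
  have bs: "\<beta> * (x + y) \<le> 1/(\<beta>-1)" if "x + y \<le> 1/(\<beta>*(\<beta>-1))"
    using mult_left_mono[OF that, of \<beta>] f b by simp
  have bs2: "\<beta> * (x + y) - 1 \<le> 1/(\<beta>-1)"
    using mult_left_mono[OF sxy, of \<beta>] f b by simp
  have e1x: "\<beta> * x \<ge> 1" if "y < 1/\<beta>" "1/(\<beta>*(\<beta>-1)) < x + y"
  proof -
    have "x > 1/(\<beta>*(\<beta>-1)) - 1/\<beta>" using that by linarith
    hence "\<beta> * x > \<beta> * (1/(\<beta>*(\<beta>-1)) - 1/\<beta>)" using b by simp
    also have "\<beta> * (1/(\<beta>*(\<beta>-1)) - 1/\<beta>) = 1/(\<beta>-1) - 1" using f by (simp add: right_diff_distrib)
    finally show ?thesis using f by linarith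
  qed
  have e2y: "\<beta> * y \<ge> 1" if "x < 1/\<beta>" "1/(\<beta>*(\<beta>-1)) < x + y"
  proof -
    have "y > 1/(\<beta>*(\<beta>-1)) - 1/\<beta>" using that by linarith
    hence "\<beta> * y > \<beta> * (1/(\<beta>*(\<beta>-1)) - 1/\<beta>)" using b by simp
    also have "\<beta> * (1/(\<beta>*(\<beta>-1)) - 1/\<beta>) = 1/(\<beta>-1) - 1" using f by (simp add: right_diff_distrib)
    finally show ?thesis using f by linarith
  qed
  have e0: "\<beta> * (x + y) \<le> 1/(\<beta>-1)" if "x < 1/\<beta>" "y < 1/\<beta>"
  proof -
    have "\<beta> * (x + y) < \<beta> * (2/\<beta>)" using that b by (intro mult_strict_left_mono) auto
    thus ?thesis using f b by simp
  qed
  have bx0: "0 \<le> \<beta> * x" "0 \<le> \<beta> * y" using x0 y0 b by auto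
  have dE: "\<And>A d. digit \<beta> (\<omega>, \<upsilon>, z) = d \<Longrightarrow> \<beta> *\<^sub>R z - qv d \<in> S \<beta> \<Longrightarrow> ?thesis" by simp
  have Sxy: "\<And>u v. (u, v) \<in> S \<beta> \<longleftrightarrow> 0 \<le> u \<and> 0 \<le> v \<and> u + v \<le> 1/(\<beta>-1)" by (simp add: S_def)
  have q0: "\<beta> *\<^sub>R z - qv 0 = (\<beta>*x, \<beta>*y)" by (simp add: zxy qv_def)
  have q1: "\<beta> *\<^sub>R z - qv 1 = (\<beta>*x - 1, \<beta>*y)" by (simp add: zxy qv_def)
  have q2: "\<beta> *\<^sub>R z - qv 2 = (\<beta>*x, \<beta>*y - 1)" by (simp add: zxy qv_def)
  have ok0: "\<beta> *\<^sub>R z - qv 0 \<in> S \<beta>" if "\<beta> * (x + y) \<le> 1/(\<beta>-1)"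
    using that bx0 unfolding q0 Sxy by (simp add: algebra_simps)
  have ok1: "\<beta> *\<^sub>R z - qv 1 \<in> S \<beta>" if "\<beta> * x \<ge> 1"
    using that bx0 bs2 unfolding q1 Sxy by (simp add: algebra_simps)
  have ok2: "\<beta> *\<^sub>R z - qv 2 \<in> S \<beta>" if "\<beta> * y \<ge> 1"
    using that bx0 bs2 unfolding q2 Sxy by (simp add: algebra_simps)
  have okv: "\<beta> *\<^sub>R z - qv v \<in> S \<beta>" if "z \<in> C012 \<beta>" for v
  proof -
    have "x \<ge> 1/\<beta>" "y \<ge> 1/\<beta>" "x + y \<le> 1/(\<beta>*(\<beta>-1))" using that zxy by (auto simp: C012_def)
    hence "\<beta> *\<^sub>R z - qv 0 \<in> S \<beta>" "\<beta> *\<^sub>R z - qv 1 \<in> S \<beta>" "\<beta> *\<^sub>R z - qv 2 \<in> S \<beta>"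
      using ok0 ok1 ok2 bx by' bs by auto
    moreover have "qv v = qv 0 \<or> qv v = qv 1 \<or> qv v = qv 2" by (auto simp: qv_def)
    ultimately show ?thesis by auto
  qed
  show ?thesis
  proof (cases "z \<in> E0 \<beta>")
    case True thus ?thesis using ok0 e0 zxy by (auto simp: digit_def E0_def)
  next
    case n0: False show ?thesis
    proof (cases "z \<in> E1 \<beta>")
      case True thus ?thesis using n0 ok1 e1x zxy by (auto simp: digit_def E1_def)
    next
      case n1: False show ?thesis
      proof (cases "z \<in> E2 \<beta>")
        case True thus ?thesis using n0 n1 ok2 e2y zxy by (auto simp: digit_def E2_def)
      next
        case n2: False show ?thesis
        proof (cases "z \<in> C01 \<beta>")
          case True
          hence "x \<ge> 1/\<beta>" "x + y \<le> 1/(\<beta>*(\<beta>-1))" using zxy by (auto simp: C01_def)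
          thus ?thesis using True n0 n1 n2 ok0 ok1 bx bs by (auto simp: digit_def)
        next
          case n3: False show ?thesis
          proof (cases "z \<in> C12 \<beta>")
            case True
            hence "x \<ge> 1/\<beta>" "y \<ge> 1/\<beta>" using zxy by (auto simp: C12_def)
            thus ?thesis using True n0 n1 n2 n3 ok2 ok1 bx by' by (auto simp: digit_def)
          next
            case n4: False show ?thesis
            proof (cases "z \<in> C02 \<beta>")
              case True
              hence "y \<ge> 1/\<beta>" "x + y \<le> 1/(\<beta>*(\<beta>-1))" using zxy by (auto simp: C02_def)
              thus ?thesis using True n0 n1 n2 n3 n4 ok0 ok2 by' bs by (auto simp: digit_def)
            next
              case n5: False
              hence "z \<in> C012 \<beta>" using regions_cover[OF z] n0 n1 n2 n3 n4 by auto
              thus ?thesis using n0 n1 n2 n3 n4 n5 okv by (auto simp: digit_def)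
            qed
          qed
        qed
      qed
    qed
  qed
qed

lemma set_borel_pair: "{(x::real, y::real). P x y} = {p. P (fst p) (snd p)}" by auto
lemma fst_borel[measurable]: "fst \<in> borel_measurable (borel :: (real\<times>real) measure)"
  by (rule borel_measurable_continuous_onI) (intro continuous_intros)
lemma snd_borel[measurable]: "snd \<in> borel_measurable (borel :: (real\<times>real) measure)"
  by (rule borel_measurable_continuous_onI) (intro continuous_intros)
lemma C01_borel: "C01 \<beta> \<in> sets (borel :: (real\<times>real) measure)"
  unfolding C01_def S_def set_borel_pair by measurable
lemma Cs_borel: "Cs \<beta> \<in> sets (borel :: (real\<times>real) measure)"
  unfolding Cs_def C01_def C12_def C02_def S_def set_borel_pair by measurable


lemma qv_norm: "norm (qv i) \<le> 1"
  by (simp add: qv_def norm_Pair)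

lemma S_bounded: assumes "1 < \<beta>" "w \<in> S \<beta>" shows "norm w \<le> 1/(\<beta>-1)"
proof -
  obtain x y where w: "w = (x,y)" by (cases w)
  hence h: "0 \<le> x" "0 \<le> y" "x + y \<le> 1/(\<beta>-1)" using assms by (auto simp: S_def)
  have "norm w = sqrt (x^2 + y^2)" by (simp add: w norm_Pair)
  also have "\<dots> \<le> sqrt ((x+y)^2)" using h by (intro real_sqrt_le_mono) (simp add: power2_eq_square algebra_simps)
  also have "\<dots> = x + y" using h by simp
  finally show ?thesis using h by linarith
qed

lemma expand_partial:
  fixes w :: "nat \<Rightarrow> real \<times> real"
  assumes step: "\<And>n. w (Suc n) = \<beta> *\<^sub>R w n - qv (b n)" and "\<beta> \<noteq> 0"
  shows "w 0 = (\<Sum>i<n. (1 / \<beta> ^ Suc i) *\<^sub>R qv (b i)) + (1 / \<beta> ^ n) *\<^sub>R w n"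
proof (induction n)
  case 0 thus ?case by simp
next
  case (Suc n)
  have "(1 / \<beta> ^ n) *\<^sub>R w n = (1 / \<beta> ^ Suc n) *\<^sub>R qv (b n) + (1 / \<beta> ^ Suc n) *\<^sub>R w (Suc n)"
    using assms(2) by (simp add: step scaleR_diff_right scaleR_scaleR field_simps)
  thus ?case using Suc by simp
qed

lemma expand:
  fixes w :: "nat \<Rightarrow> real \<times> real"
  assumes b: "1 < \<beta>" and step: "\<And>n. w (Suc n) = \<beta> *\<^sub>R w n - qv (b n)" and S: "\<And>n. w n \<in> S \<beta>"
  shows "w j = (\<Sum>i. (1 / \<beta> ^ Suc i) *\<^sub>R qv (b (j + i)))"
proof -
  define w' where "w' n = w (j + n)" for n
  have step': "\<And>n. w' (Suc n) = \<beta> *\<^sub>R w' n - qv (b (j + n))" by (simp add: w'_def step)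
  have lim0: "(\<lambda>n. (1 / \<beta> ^ n) *\<^sub>R w' n) \<longlonglongrightarrow> 0"
  proof (rule Lim_null_comparison)
    show "\<forall>\<^sub>F n in sequentially. norm ((1 / \<beta> ^ n) *\<^sub>R w' n) \<le> (1/(\<beta>-1)) * (1/\<beta>) ^ n"
    proof (intro always_eventually allI)
      fix n
      have "norm ((1 / \<beta> ^ n) *\<^sub>R w' n) = (1/\<beta>)^n * norm (w' n)" using b by (simp add: power_one_over)
      also have "\<dots> \<le> (1/\<beta>)^n * (1/(\<beta>-1))" unfolding w'_def by (rule mult_left_mono[OF S_bounded[OF b S]]) (use b in simp)
      finally show "norm ((1 / \<beta> ^ n) *\<^sub>R w' n) \<le> (1/(\<beta>-1)) * (1/\<beta>) ^ n" by (simp add: mult.commute)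
    qed
    show "(\<lambda>n. (1/(\<beta>-1)) * (1/\<beta>) ^ n) \<longlonglongrightarrow> 0"
      using b by (intro tendsto_mult_right_zero LIMSEQ_power_zero) auto
  qed
  have "(\<lambda>i. (1 / \<beta> ^ Suc i) *\<^sub>R qv (b (j + i))) sums w' 0"
    unfolding sums_def
  proof -
    have eq: "(\<Sum>i<n. (1 / \<beta> ^ Suc i) *\<^sub>R qv (b (j + i))) = w' 0 - (1 / \<beta> ^ n) *\<^sub>R w' n" for n
      using expand_partial[of w' \<beta> "\<lambda>i. b (j+i)" n, OF step'] b by simp
    show "(\<lambda>n. \<Sum>i<n. (1 / \<beta> ^ Suc i) *\<^sub>R qv (b (j + i))) \<longlonglongrightarrow> w' 0"
      unfolding eq using tendsto_diff[OF tendsto_const lim0, of "w' 0"] by simp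
  qed
  thus ?thesis by (simp add: sums_unique w'_def)
qed

definition W :: "real \<Rightarrow> (nat \<Rightarrow> nat) \<Rightarrow> nat \<Rightarrow> real \<times> real" where
  "W \<beta> b j = (\<Sum>i. (1 / \<beta> ^ Suc i) *\<^sub>R qv (b (j + i)))"

lemma W_summable: assumes "1 < \<beta>" shows "summable (\<lambda>i. (1 / \<beta> ^ Suc i) *\<^sub>R qv (b (j + i)))"
proof (rule summable_comparison_test)
  show "\<exists>N. \<forall>n\<ge>N. norm ((1 / \<beta> ^ Suc n) *\<^sub>R qv (b (j + n))) \<le> (1/\<beta>) * (1/\<beta>) ^ n"
  proof (intro exI[of _ 0] allI impI)
    fix n :: nat
    have "norm ((1 / \<beta> ^ Suc n) *\<^sub>R qv (b (j + n))) = (1 / \<beta> ^ Suc n) * norm (qv (b (j + n)))"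
      using assms by simp
    also have "\<dots> \<le> (1 / \<beta> ^ Suc n) * 1" by (rule mult_left_mono[OF qv_norm]) (use assms in simp)
    also have "\<dots> = (1/\<beta>) * (1/\<beta>) ^ n" by (simp add: power_one_over)
    finally show "norm ((1 / \<beta> ^ Suc n) *\<^sub>R qv (b (j + n))) \<le> (1/\<beta>) * (1/\<beta>) ^ n" .
  qed
  show "summable (\<lambda>n. (1/\<beta>) * (1/\<beta>) ^ n)"
    using assms by (intro summable_mult summable_geometric) auto
qed

lemma W_step: assumes "1 < \<beta>" shows "W \<beta> b (Suc j) = \<beta> *\<^sub>R W \<beta> b j - qv (b j)"
proof -
  have sm: "summable (\<lambda>i. (1 / \<beta> ^ Suc i) *\<^sub>R qv (b (j + i)))" by (rule W_summable[OF assms])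
  have "(\<Sum>i. (1 / \<beta> ^ Suc (Suc i)) *\<^sub>R qv (b (j + Suc i))) = W \<beta> b j - (1/\<beta>) *\<^sub>R qv (b j)"
    using suminf_split_head[OF sm] by (simp add: W_def)
  moreover have "(\<Sum>i. (1 / \<beta> ^ Suc (Suc i)) *\<^sub>R qv (b (j + Suc i))) = (1/\<beta>) *\<^sub>R W \<beta> b (Suc j)"
  proof -
    have "(\<Sum>i. (1 / \<beta> ^ Suc (Suc i)) *\<^sub>R qv (b (j + Suc i))) = (\<Sum>i. (1/\<beta>) *\<^sub>R ((1 / \<beta> ^ Suc i) *\<^sub>R qv (b (Suc j + i))))"
      by (simp add: scaleR_scaleR)
    also have "\<dots> = (1/\<beta>) *\<^sub>R W \<beta> b (Suc j)"
      unfolding W_def by (rule suminf_scaleR_right[symmetric, OF W_summable[OF assms]])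
    finally show ?thesis .
  qed
  ultimately have "(1/\<beta>) *\<^sub>R W \<beta> b (Suc j) = W \<beta> b j - (1/\<beta>) *\<^sub>R qv (b j)" by simp
  hence "\<beta> *\<^sub>R ((1/\<beta>) *\<^sub>R W \<beta> b (Suc j)) = \<beta> *\<^sub>R (W \<beta> b j - (1/\<beta>) *\<^sub>R qv (b j))" by simp
  thus ?thesis using assms by (simp add: scaleR_diff_right)
qed

lemma W_S: assumes "1 < \<beta>" shows "W \<beta> b j \<in> S \<beta>"
proof -
  let ?f = "\<lambda>i. (1 / \<beta> ^ Suc i) *\<^sub>R qv (b (j + i))"
  have sm: "summable ?f" by (rule W_summable[OF assms])
  have fst: "fst (W \<beta> b j) = (\<Sum>i. fst (?f i))"
    unfolding W_def by (rule bounded_linear.suminf[OF bounded_linear_fst sm])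
  have snd: "snd (W \<beta> b j) = (\<Sum>i. snd (?f i))"
    unfolding W_def by (rule bounded_linear.suminf[OF bounded_linear_snd sm])
  have sum: "fst (W \<beta> b j) + snd (W \<beta> b j) = (\<Sum>i. fst (?f i) + snd (?f i))"
    unfolding W_def by (rule bounded_linear.suminf[OF bounded_linear_add[OF bounded_linear_fst bounded_linear_snd] sm])
  have smf: "summable (\<lambda>i. fst (?f i))" using bounded_linear.summable[OF bounded_linear_fst sm] .
  have sms: "summable (\<lambda>i. snd (?f i))" using bounded_linear.summable[OF bounded_linear_snd sm] .
  have "0 \<le> (\<Sum>i. fst (?f i))" using assms by (intro suminf_nonneg smf) (simp add: qv_def)
  moreover have "0 \<le> (\<Sum>i. snd (?f i))" using assms by (intro suminf_nonneg sms) (simp add: qv_def)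
  moreover have "(\<Sum>i. fst (?f i) + snd (?f i)) \<le> (\<Sum>i. (1/\<beta>) * (1/\<beta>) ^ i)"
  proof (rule suminf_le)
    show "summable (\<lambda>i. fst (?f i) + snd (?f i))" using smf sms by (rule summable_add)
    show "summable (\<lambda>i. (1/\<beta>) * (1/\<beta>) ^ i)" using assms by (intro summable_mult summable_geometric) auto
    show "fst (?f i) + snd (?f i) \<le> (1/\<beta>) * (1/\<beta>) ^ i" for i
      using assms by (simp add: qv_def power_one_over)
  qed
  moreover have "(\<Sum>i. (1/\<beta>) * (1/\<beta>) ^ i) = 1/(\<beta>-1)"
  proof -
    have "(\<Sum>i. (1/\<beta>) * (1/\<beta>) ^ i) = (1/\<beta>) * (1 / (1 - 1/\<beta>))"
      using assms by (subst suminf_mult) (auto simp: suminf_geometric)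
    also have "\<dots> = 1/(\<beta>-1)" using assms by (simp add: field_simps)
    finally show ?thesis .
  qed
  ultimately show ?thesis using fst snd sum by (cases "W \<beta> b j") (auto simp: S_def)
qed



definition letter :: "real \<Rightarrow> real \<times> real \<Rightarrow> nat \<Rightarrow> nat" where
  "letter \<beta> z d = (if d = 0 then 0 else if z \<in> C01 \<beta> then 1 else if z \<in> C12 \<beta> then (if d = 1 then 0 else 1) else 1)"

lemma letter_range: "letter \<beta> z d \<in> {0,1}" by (simp add: letter_def)

lemma disj:
  shows "z \<in> Cs \<beta> \<Longrightarrow> z \<notin> E0 \<beta> \<and> z \<notin> E1 \<beta> \<and> z \<notin> E2 \<beta> \<and> z \<notin> C012 \<beta>"
    and "z \<in> C012 \<beta> \<Longrightarrow> z \<notin> E0 \<beta> \<and> z \<notin> E1 \<beta> \<and> z \<notin> E2 \<beta> \<and> z \<notin> C01 \<beta> \<and> z \<notin> C12 \<beta> \<and> z \<notin> C02 \<beta>"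
proof -
  obtain x y where zxy: "z = (x, y)" by (cases z)
  define a where "a = 1/\<beta>"
  define c where "c = 1/(\<beta>*(\<beta>-1))"
  define M where "M = 1/(\<beta>-1)"
  have m: "(x,y) \<in> E0 \<beta> \<longleftrightarrow> (x,y) \<in> S \<beta> \<and> 0 \<le> x \<and> x < a \<and> 0 \<le> y \<and> y < a"
     "(x,y) \<in> E1 \<beta> \<longleftrightarrow> (x,y) \<in> S \<beta> \<and> 0 \<le> y \<and> y < a \<and> c < x + y \<and> x + y \<le> M"
     "(x,y) \<in> E2 \<beta> \<longleftrightarrow> (x,y) \<in> S \<beta> \<and> 0 \<le> x \<and> x < a \<and> c < x + y \<and> x + y \<le> M"
     "(x,y) \<in> C01 \<beta> \<longleftrightarrow> (x,y) \<in> S \<beta> \<and> x \<ge> a \<and> 0 \<le> y \<and> y < a \<and> x + y \<le> c"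
     "(x,y) \<in> C12 \<beta> \<longleftrightarrow> (x,y) \<in> S \<beta> \<and> x \<ge> a \<and> y \<ge> a \<and> c < x + y \<and> x + y \<le> M"
     "(x,y) \<in> C02 \<beta> \<longleftrightarrow> (x,y) \<in> S \<beta> \<and> 0 \<le> x \<and> x < a \<and> y \<ge> a \<and> x + y \<le> c"
     "(x,y) \<in> C012 \<beta> \<longleftrightarrow> (x,y) \<in> S \<beta> \<and> x \<ge> a \<and> y \<ge> a \<and> x + y \<le> c"
    unfolding a_def c_def M_def E0_def E1_def E2_def C01_def C12_def C02_def C012_def by auto
  show "z \<in> Cs \<beta> \<Longrightarrow> z \<notin> E0 \<beta> \<and> z \<notin> E1 \<beta> \<and> z \<notin> E2 \<beta> \<and> z \<notin> C012 \<beta>"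
    unfolding zxy Cs_def Un_iff m by auto
  show "z \<in> C012 \<beta> \<Longrightarrow> z \<notin> E0 \<beta> \<and> z \<notin> E1 \<beta> \<and> z \<notin> E2 \<beta> \<and> z \<notin> C01 \<beta> \<and> z \<notin> C12 \<beta> \<and> z \<notin> C02 \<beta>"
    unfolding zxy m by auto
qed

lemma consist:
  fixes \<beta> :: real assumes b: "1 < \<beta>" and d: "d \<in> {0,1,2}" and z': "\<beta> *\<^sub>R z - qv d \<in> S \<beta>"
  shows "(z \<in> E0 \<beta> \<longrightarrow> d = 0) \<and> (z \<in> E1 \<beta> \<longrightarrow> d = 1) \<and> (z \<in> E2 \<beta> \<longrightarrow> d = 2)
    \<and> (z \<in> C01 \<beta> \<longrightarrow> d \<noteq> 2) \<and> (z \<in> C12 \<beta> \<longrightarrow> d \<noteq> 0) \<and> (z \<in> C02 \<beta> \<longrightarrow> d \<noteq> 1)"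
proof -
  obtain x y where zxy: "z = (x, y)" by (cases z)
  have c1: "x \<ge> 1/\<beta>" if "d = 1"
  proof -
    have "\<beta> * x - 1 \<ge> 0" using z' that by (simp add: zxy qv_def S_def)
    thus ?thesis using b by (simp add: field_simps)
  qed
  have c2: "y \<ge> 1/\<beta>" if "d = 2"
  proof -
    have "\<beta> * y - 1 \<ge> 0" using z' that by (simp add: zxy qv_def S_def)
    thus ?thesis using b by (simp add: field_simps)
  qed
  have c0: "x + y \<le> 1/(\<beta>*(\<beta>-1))" if "d = 0"
  proof -
    have "\<beta> * x + \<beta> * y \<le> 1/(\<beta>-1)" using z' that by (simp add: zxy qv_def S_def)
    hence "\<beta> * (x + y) \<le> 1/(\<beta>-1)" by (simp add: algebra_simps)
    thus ?thesis using b by (simp add: field_simps)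
  qed
  show ?thesis using d c0 c1 c2 unfolding zxy E0_def E1_def E2_def C01_def C12_def C02_def by auto
qed

lemma digit_eq:
  fixes \<beta> :: real assumes b: "1 < \<beta>" and d: "d \<in> {0,1,2}" and z': "\<beta> *\<^sub>R z - qv d \<in> S \<beta>"
    and z: "z \<in> S \<beta>"
    and om: "z \<in> Cs \<beta> \<Longrightarrow> \<omega> 0 = letter \<beta> z d" and up: "z \<in> C012 \<beta> \<Longrightarrow> \<upsilon> 0 = d"
  shows "digit \<beta> (\<omega>, \<upsilon>, z) = d"
proof -
  note c = consist[OF b d z']
  show ?thesis
  proof (cases "z \<in> Cs \<beta>")
    case True
    note dj = disj(1)[OF True]
    have o: "\<omega> 0 = letter \<beta> z d" by (rule om[OF True])
    consider "z \<in> C01 \<beta>" | "z \<notin> C01 \<beta>" "z \<in> C12 \<beta>" | "z \<notin> C01 \<beta>" "z \<notin> C12 \<beta>" "z \<in> C02 \<beta>"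
      using True unfolding Cs_def by blast
    thus ?thesis
    proof cases
      case 1 thus ?thesis using dj c o d by (auto simp: digit_def letter_def)
    next
      case 2 thus ?thesis using dj c o d by (auto simp: digit_def letter_def)
    next
      case 3 thus ?thesis using dj c o d by (auto simp: digit_def letter_def)
    qed
  next
    case False
    show ?thesis
    proof (cases "z \<in> C012 \<beta>")
      case True
      thus ?thesis using disj(2)[OF True] up[OF True] by (simp add: digit_def)
    next
      case False
      have "z \<notin> C01 \<beta>" "z \<notin> C12 \<beta>" "z \<notin> C02 \<beta>" using \<open>z \<notin> Cs \<beta>\<close> by (auto simp: Cs_def)
      hence "z \<in> E0 \<beta> \<or> z \<in> E1 \<beta> \<or> z \<in> E2 \<beta>" using regions_cover[OF z] False by blast
      thus ?thesis using c d \<open>z \<notin> C01 \<beta>\<close> \<open>z \<notin> C12 \<beta>\<close> \<open>z \<notin> C02 \<beta>\<close> by (auto simp: digit_def)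
    qed
  qed
qed

lemma digit_letter:
  assumes "z \<in> Cs \<beta>" "\<omega> 0 \<in> {0,1}"
  shows "\<omega> 0 = letter \<beta> z (digit \<beta> (\<omega>, \<upsilon>, z))"
proof -
  note dj = disj(1)[OF assms(1)]
  consider "z \<in> C01 \<beta>" | "z \<notin> C01 \<beta>" "z \<in> C12 \<beta>" | "z \<notin> C01 \<beta>" "z \<notin> C12 \<beta>" "z \<in> C02 \<beta>"
    using assms(1) unfolding Cs_def by blast
  thus ?thesis
  proof cases
    case 1 thus ?thesis using dj assms(2) by (auto simp: digit_def letter_def)
  next
    case 2 thus ?thesis using dj assms(2) by (auto simp: digit_def letter_def)
  next
    case 3 thus ?thesis using dj assms(2) by (auto simp: digit_def letter_def)
  qed
qed

lemma digit_C012: "z \<in> C012 \<beta> \<Longrightarrow> digit \<beta> (\<omega>, \<upsilon>, z) = \<upsilon> 0"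
  using disj(2) by (simp add: digit_def)

lemma digit_range: "\<upsilon> 0 \<in> {0,1,2} \<Longrightarrow> digit \<beta> (\<omega>, \<upsilon>, z) \<in> {0,1,2}"
  by (simp add: digit_def)

primrec cnt :: "(nat \<Rightarrow> bool) \<Rightarrow> nat \<Rightarrow> nat" where
  "cnt P 0 = 0"
| "cnt P (Suc n) = (if P n then Suc (cnt P n) else cnt P n)"

lemma cnt_mono: "n \<le> m \<Longrightarrow> cnt P n \<le> cnt P m"
  by (rule lift_Suc_mono_le[of "cnt P"]) auto

lemma cnt_unique: assumes "P n" "P m" "cnt P n = cnt P m" shows "n = m"
proof (rule ccontr)
  assume "n \<noteq> m"
  then consider "n < m" | "m < n" by linarith
  thus False
  proof cases
    case 1
    hence "cnt P (Suc n) \<le> cnt P m" by (intro cnt_mono) simp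
    thus False using assms by simp
  next
    case 2
    hence "cnt P (Suc m) \<le> cnt P n" by (intro cnt_mono) simp
    thus False using assms by simp
  qed
qed

lemma cnt_const: assumes "\<And>i. n \<le> i \<Longrightarrow> i < m \<Longrightarrow> \<not> P i" "n \<le> m" shows "cnt P m = cnt P n"
  using assms(2)
proof (induction rule: dec_induct)
  case base show ?case by simp
next
  case (step k)
  hence "\<not> P k" using assms(1) by auto
  thus ?case using step by simp
qed

lemma cnt_hit: assumes "\<exists>\<^sub>\<infinity> n. P n" shows "\<exists>n. P n \<and> cnt P n = k"
proof (induction k)
  case 0
  obtain n where "P n" using INFM_EX[OF assms] by blast
  define m where "m = (LEAST n. P n)"
  have "P m" unfolding m_def using \<open>P n\<close> by (rule LeastI)
  moreover have "cnt P m = cnt P 0"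
  proof (rule cnt_const)
    show "\<not> P i" if "0 \<le> i" "i < m" for i using not_less_Least[of i P] that unfolding m_def by blast
  qed simp
  ultimately show ?case by auto
next
  case (Suc k)
  then obtain n where n: "P n" "cnt P n = k" by auto
  have "\<exists>n'>n. P n'" using INFM_nat[THEN iffD1, OF assms] by blast
  then obtain n' where "n' > n" "P n'" by blast
  define m where "m = (LEAST i. n < i \<and> P i)"
  have m: "n < m \<and> P m" unfolding m_def by (rule LeastI[of _ n']) (use \<open>n' > n\<close> \<open>P n'\<close> in auto)
  have "cnt P m = cnt P (Suc n)"
  proof (rule cnt_const)
    show "\<not> P i" if "Suc n \<le> i" "i < m" for i
      using not_less_Least[of i "\<lambda>i. n < i \<and> P i"] that unfolding m_def by auto
  qed (use m in simp)
  thus ?case using m n by auto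
qed

lemma cnt_Least: "P n \<Longrightarrow> (LEAST t. P t \<and> cnt P t = cnt P n) = n"
  by (rule Least_equality) (auto, metis cnt_unique order_refl)




abbreviation ZZ :: "real \<Rightarrow> (nat \<Rightarrow> nat) \<times> (nat \<Rightarrow> nat) \<times> (real \<times> real) \<Rightarrow> nat \<Rightarrow> real \<times> real" where
  "ZZ \<beta> p n \<equiv> snd (snd ((K \<beta> ^^ n) p))"

lemma K_simp: "K \<beta> (\<omega>, \<upsilon>, z) = (if z \<in> Cs \<beta> then shift \<omega> else \<omega>, if z \<in> C012 \<beta> then shift \<upsilon> else \<upsilon>,
      \<beta> *\<^sub>R z - qv (digit \<beta> (\<omega>, \<upsilon>, z)))"
  by (simp add: K_def)

lemma iter_form:
  "(K \<beta> ^^ n) (\<omega>, \<upsilon>, z) = ((\<lambda>i. \<omega> (cnt (\<lambda>i. ZZ \<beta> (\<omega>, \<upsilon>, z) i \<in> Cs \<beta>) n + i)),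
      (\<lambda>i. \<upsilon> (cnt (\<lambda>i. ZZ \<beta> (\<omega>, \<upsilon>, z) i \<in> C012 \<beta>) n + i)), ZZ \<beta> (\<omega>, \<upsilon>, z) n)"
proof (induction n)
  case 0 thus ?case by simp
next
  case (Suc n)
  define x where "x = (\<omega>, \<upsilon>, z)"
  define P where "P = (\<lambda>i. ZZ \<beta> x i \<in> Cs \<beta>)"
  define Q where "Q = (\<lambda>i. ZZ \<beta> x i \<in> C012 \<beta>)"
  define A where "A = (\<lambda>i. \<omega> (cnt P n + i))"
  define B where "B = (\<lambda>i. \<upsilon> (cnt Q n + i))"
  define c where "c = ZZ \<beta> x n"
  have IH: "(K \<beta> ^^ n) x = (A, B, c)" unfolding A_def B_def c_def P_def Q_def x_def by (rule Suc.IH)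
  have ks: "(K \<beta> ^^ Suc n) x = K \<beta> (A, B, c)" by (simp only: funpow.simps o_apply IH)
  have cP: "cnt P (Suc n) = (if c \<in> Cs \<beta> then Suc (cnt P n) else cnt P n)" by (simp only: cnt.simps P_def c_def)
  have cQ: "cnt Q (Suc n) = (if c \<in> C012 \<beta> then Suc (cnt Q n) else cnt Q n)" by (simp only: cnt.simps Q_def c_def)
  have "(K \<beta> ^^ Suc n) x = ((\<lambda>i. \<omega> (cnt P (Suc n) + i)), (\<lambda>i. \<upsilon> (cnt Q (Suc n) + i)), ZZ \<beta> x (Suc n))"
    unfolding ks cP cQ by (simp add: K_simp shift_def A_def B_def)
  thus ?case unfolding x_def P_def Q_def .
qed

lemma ZZ_step: "ZZ \<beta> p (Suc n) = \<beta> *\<^sub>R ZZ \<beta> p n - qv (phi \<beta> p n)"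
proof -
  obtain a b c where e: "(K \<beta> ^^ n) p = (a, b, c)" by (cases "(K \<beta> ^^ n) p") auto
  show ?thesis by (simp add: e phi_def K_simp)
qed

lemma ZZ_S: assumes "1 < \<beta>" "\<beta> \<le> 3/2" "snd (snd p) \<in> S \<beta>" shows "ZZ \<beta> p n \<in> S \<beta>"
proof (induction n)
  case 0 thus ?case using assms by simp
next
  case (Suc n)
  obtain a b c where e: "(K \<beta> ^^ n) p = (a, b, c)" by (cases "(K \<beta> ^^ n) p") auto
  have "c \<in> S \<beta>" using Suc e by simp
  thus ?case using step_S[OF assms(1,2), of c a b] by (simp add: e K_simp)
qed

lemma space_Omega: "\<omega> \<in> space Omega_M \<longleftrightarrow> (\<forall>i. \<omega> i \<in> {0,1})"
  by (auto simp: Omega_M_def space_PiM PiE_def Pi_def)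

lemma space_Upsilon: "\<upsilon> \<in> space Upsilon_M \<longleftrightarrow> (\<forall>i. \<upsilon> i \<in> {0,1,2})"
  by (auto simp: Upsilon_M_def space_PiM PiE_def Pi_def)

lemma space_X: "(\<omega>, \<upsilon>, z) \<in> space (X_M \<beta>) \<longleftrightarrow> (\<forall>i. \<omega> i \<in> {0,1}) \<and> (\<forall>i. \<upsilon> i \<in> {0,1,2}) \<and> z \<in> S \<beta>"
  by (simp add: X_M_def space_pair_measure S_M_def space_restrict_space space_Omega space_Upsilon)

lemma phi_range: assumes "(\<omega>, \<upsilon>, z) \<in> space (X_M \<beta>)" shows "phi \<beta> (\<omega>, \<upsilon>, z) n \<in> {0,1,2}"
proof -
  have "\<forall>i. \<upsilon> i \<in> {0,1,2}" using assms by (simp add: space_X)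
  thus ?thesis unfolding phi_def by (subst iter_form) (rule digit_range, simp)
qed

lemma phi_space: assumes "p \<in> space (X_M \<beta>)" shows "phi \<beta> p \<in> space Upsilon_M"
  using assms phi_range by (cases p) (auto simp: space_Upsilon)

lemma ZZ_W: assumes "1 < \<beta>" "\<beta> \<le> 3/2" "p \<in> space (X_M \<beta>)" shows "ZZ \<beta> p j = W \<beta> (phi \<beta> p) j"
proof -
  have "snd (snd p) \<in> S \<beta>" using assms(3) by (cases p) (simp add: space_X)
  thus ?thesis unfolding W_def using assms
    by (intro expand[of \<beta> "ZZ \<beta> p" "phi \<beta> p"] ZZ_step ZZ_S) auto
qed

lemma phi_inj: assumes b: "1 < \<beta>" "\<beta> \<le> 3/2" and p: "p \<in> Z \<beta>" and q: "q \<in> Z \<beta>" and e: "phi \<beta> p = phi \<beta> q"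
  shows "p = q"
proof -
  obtain \<omega> \<upsilon> z where pp: "p = (\<omega>, \<upsilon>, z)" by (cases p) auto
  obtain \<omega>' \<upsilon>' z' where qq: "q = (\<omega>', \<upsilon>', z')" by (cases q) auto
  have ps: "p \<in> space (X_M \<beta>)" and qs: "q \<in> space (X_M \<beta>)" using p q by (auto simp: Z_def)
  have zz: "ZZ \<beta> p n = ZZ \<beta> q n" for n
  proof (induction n)
    case 0 thus ?case using ZZ_W[OF b ps, of 0] ZZ_W[OF b qs, of 0] e by simp
  next
    case (Suc n) thus ?case by (simp only: ZZ_step e)
  qed
  have z: "z = z'" using zz[of 0] pp qq by simp
  have om: "\<omega> k = \<omega>' k" for k
  proof -
    have "\<exists>\<^sub>\<infinity> n. ZZ \<beta> p n \<in> Cs \<beta>" using p by (simp add: Z_def)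
    then obtain n where n: "ZZ \<beta> p n \<in> Cs \<beta>" "cnt (\<lambda>i. ZZ \<beta> p i \<in> Cs \<beta>) n = k" using cnt_hit by blast
    have o1: "\<forall>i. \<omega> i \<in> {0,1}" using ps pp by (simp add: space_X)
    have o2: "\<forall>i. \<omega>' i \<in> {0,1}" using qs qq by (simp add: space_X)
    have cq: "cnt (\<lambda>i. ZZ \<beta> q i \<in> Cs \<beta>) n = k" using n(2) zz by simp
    have "\<omega> k = letter \<beta> (ZZ \<beta> p n) (phi \<beta> p n)"
      using digit_letter[of "ZZ \<beta> p n" \<beta> "\<lambda>i. \<omega> (k + i)"] n o1
      unfolding phi_def pp by (subst iter_form, subst (asm) iter_form) simp
    moreover have "\<omega>' k = letter \<beta> (ZZ \<beta> q n) (phi \<beta> q n)"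
      using digit_letter[of "ZZ \<beta> q n" \<beta> "\<lambda>i. \<omega>' (k + i)"] n cq zz o2
      unfolding phi_def qq by (subst iter_form, subst (asm) iter_form) simp
    ultimately show ?thesis using zz e by simp
  qed
  have up: "\<upsilon> k = \<upsilon>' k" for k
  proof -
    have "\<exists>\<^sub>\<infinity> n. ZZ \<beta> p n \<in> C012 \<beta>" using p by (simp add: Z_def)
    then obtain n where n: "ZZ \<beta> p n \<in> C012 \<beta>" "cnt (\<lambda>i. ZZ \<beta> p i \<in> C012 \<beta>) n = k" using cnt_hit by blast
    have cq: "cnt (\<lambda>i. ZZ \<beta> q i \<in> C012 \<beta>) n = k" using n(2) zz by simp
    have "\<upsilon> k = phi \<beta> p n"
      using n unfolding phi_def pp by (subst iter_form) (simp add: digit_C012)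
    moreover have "\<upsilon>' k = phi \<beta> q n"
      using n cq zz unfolding phi_def qq by (subst iter_form) (simp add: digit_C012)
    ultimately show ?thesis using e by simp
  qed
  show ?thesis using pp qq z om up by auto
qed




definition omG :: "real \<Rightarrow> (nat \<Rightarrow> nat) \<Rightarrow> nat \<Rightarrow> nat" where
  "omG \<beta> b k = (let t = (LEAST t. W \<beta> b t \<in> Cs \<beta> \<and> cnt (\<lambda>i. W \<beta> b i \<in> Cs \<beta>) t = k) in letter \<beta> (W \<beta> b t) (b t))"

definition upG :: "real \<Rightarrow> (nat \<Rightarrow> nat) \<Rightarrow> nat \<Rightarrow> nat" where
  "upG \<beta> b k = b (LEAST t. W \<beta> b t \<in> C012 \<beta> \<and> cnt (\<lambda>i. W \<beta> b i \<in> C012 \<beta>) t = k)"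

definition G :: "real \<Rightarrow> (nat \<Rightarrow> nat) \<Rightarrow> (nat \<Rightarrow> nat) \<times> (nat \<Rightarrow> nat) \<times> (real \<times> real)" where
  "G \<beta> b = (omG \<beta> b, upG \<beta> b, W \<beta> b 0)"

lemma G_space: assumes "1 < \<beta>" "b \<in> space Upsilon_M" shows "G \<beta> b \<in> space (X_M \<beta>)"
  using assms W_S[OF assms(1)] letter_range unfolding G_def space_X space_Upsilon
  by (auto simp: omG_def upG_def Let_def)

lemma G_orbit:
  assumes b: "1 < \<beta>" "\<beta> \<le> 3/2" and bs: "b \<in> space Upsilon_M"
  shows "(K \<beta> ^^ n) (G \<beta> b) = ((\<lambda>i. omG \<beta> b (cnt (\<lambda>i. W \<beta> b i \<in> Cs \<beta>) n + i)),
      (\<lambda>i. upG \<beta> b (cnt (\<lambda>i. W \<beta> b i \<in> C012 \<beta>) n + i)), W \<beta> b n)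
    \<and> digit \<beta> ((K \<beta> ^^ n) (G \<beta> b)) = b n"
proof -
  define P where "P = (\<lambda>i. W \<beta> b i \<in> Cs \<beta>)"
  define Q where "Q = (\<lambda>i. W \<beta> b i \<in> C012 \<beta>)"
  define s where "s n = ((\<lambda>i. omG \<beta> b (cnt P n + i)), (\<lambda>i. upG \<beta> b (cnt Q n + i)), W \<beta> b n)" for n
  have bv: "b n \<in> {0,1,2}" for n using bs by (simp add: space_Upsilon)
  have dig: "digit \<beta> (s n) = b n" for n
    unfolding s_def
  proof (rule digit_eq[OF b(1) bv])
    show "\<beta> *\<^sub>R W \<beta> b n - qv (b n) \<in> S \<beta>" using W_step[OF b(1), of b n] W_S[OF b(1)] by metis
    show "W \<beta> b n \<in> S \<beta>" by (rule W_S[OF b(1)])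
    show "omG \<beta> b (cnt P n + 0) = letter \<beta> (W \<beta> b n) (b n)" if "W \<beta> b n \<in> Cs \<beta>"
    proof -
      have h: "(LEAST t. W \<beta> b t \<in> Cs \<beta> \<and> cnt (\<lambda>i. W \<beta> b i \<in> Cs \<beta>) t = cnt (\<lambda>i. W \<beta> b i \<in> Cs \<beta>) n) = n"
        using cnt_Least[of "\<lambda>i. W \<beta> b i \<in> Cs \<beta>" n] that by simp
      show ?thesis by (simp add: omG_def Let_def P_def h)
    qed
    show "upG \<beta> b (cnt Q n + 0) = b n" if "W \<beta> b n \<in> C012 \<beta>"
    proof -
      have h: "(LEAST t. W \<beta> b t \<in> C012 \<beta> \<and> cnt (\<lambda>i. W \<beta> b i \<in> C012 \<beta>) t = cnt (\<lambda>i. W \<beta> b i \<in> C012 \<beta>) n) = n"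
        using cnt_Least[of "\<lambda>i. W \<beta> b i \<in> C012 \<beta>" n] that by simp
      show ?thesis by (simp add: upG_def Q_def h)
    qed
  qed
  have orb: "(K \<beta> ^^ n) (G \<beta> b) = s n" for n
  proof (induction n)
    case 0 show ?case by (simp add: s_def G_def)
  next
    case (Suc n)
    have "(K \<beta> ^^ Suc n) (G \<beta> b) = K \<beta> (s n)" by (simp only: funpow.simps o_apply Suc.IH)
    also have "\<dots> = s (Suc n)"
    proof -
      have "K \<beta> (s n) = (if W \<beta> b n \<in> Cs \<beta> then shift (\<lambda>i. omG \<beta> b (cnt P n + i)) else (\<lambda>i. omG \<beta> b (cnt P n + i)),
          if W \<beta> b n \<in> C012 \<beta> then shift (\<lambda>i. upG \<beta> b (cnt Q n + i)) else (\<lambda>i. upG \<beta> b (cnt Q n + i)),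
          \<beta> *\<^sub>R W \<beta> b n - qv (b n))"
        using dig[of n] unfolding s_def by (simp only: K_simp)
      thus ?thesis unfolding s_def using W_step[OF b(1), of b n]
        by (simp add: shift_def P_def Q_def)
    qed
    finally show ?case .
  qed
  show ?thesis using orb dig unfolding s_def P_def Q_def by simp
qed

lemma G_phi: assumes b: "1 < \<beta>" "\<beta> \<le> 3/2" and bs: "b \<in> space Upsilon_M"
  shows "phi \<beta> (G \<beta> b) = b" and "ZZ \<beta> (G \<beta> b) n = W \<beta> b n"
proof -
  show "phi \<beta> (G \<beta> b) = b" unfolding phi_def by (rule ext) (rule conjunct2[OF G_orbit[OF b bs]])
  show "ZZ \<beta> (G \<beta> b) n = W \<beta> b n" using G_orbit[OF b bs, of n] by simp
qed

lemma G_Z: assumes b: "1 < \<beta>" "\<beta> \<le> 3/2" and bD: "b \<in> D \<beta>"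
  shows "G \<beta> b \<in> Z \<beta>" "phi \<beta> (G \<beta> b) = b"
proof -
  have bs: "b \<in> space Upsilon_M" using bD by (simp add: D_def)
  show "phi \<beta> (G \<beta> b) = b" by (rule G_phi(1)[OF b bs])
  have e: "\<And>n. ZZ \<beta> (G \<beta> b) n = W \<beta> b n" by (rule G_phi(2)[OF b bs])
  have i1: "\<exists>\<^sub>\<infinity>j. W \<beta> b j \<in> Cs \<beta>" "\<exists>\<^sub>\<infinity>j. W \<beta> b j \<in> C012 \<beta>"
    using bD unfolding D_def W_def[symmetric] by auto
  show "G \<beta> b \<in> Z \<beta>" unfolding Z_def mem_Collect_eq e using i1 G_space[OF b(1) bs] by simp
qed

lemma phi_D: assumes b: "1 < \<beta>" "\<beta> \<le> 3/2" and p: "p \<in> Z \<beta>" shows "phi \<beta> p \<in> D \<beta>"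
proof -
  have ps: "p \<in> space (X_M \<beta>)" using p by (simp add: Z_def)
  have i1: "\<exists>\<^sub>\<infinity>j. W \<beta> (phi \<beta> p) j \<in> Cs \<beta>" "\<exists>\<^sub>\<infinity>j. W \<beta> (phi \<beta> p) j \<in> C012 \<beta>"
    using p unfolding Z_def mem_Collect_eq ZZ_W[OF b ps] by auto
  show ?thesis unfolding D_def W_def[symmetric] using i1 phi_space[OF ps] by simp
qed

lemma phi_bij: assumes b: "1 < \<beta>" "\<beta> \<le> 3/2" shows "bij_betw (phi \<beta>) (Z \<beta>) (D \<beta>)"
  unfolding bij_betw_def
proof
  show "inj_on (phi \<beta>) (Z \<beta>)" using phi_inj[OF b] by (auto intro: inj_onI)
  show "phi \<beta> ` Z \<beta> = D \<beta>"
  proof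
    show "phi \<beta> ` Z \<beta> \<subseteq> D \<beta>" using phi_D[OF b] by auto
    show "D \<beta> \<subseteq> phi \<beta> ` Z \<beta>"
    proof
      fix x assume "x \<in> D \<beta>"
      thus "x \<in> phi \<beta> ` Z \<beta>" using G_Z[OF b] by (metis image_eqI)
    qed
  qed
qed




lemma regions_borel:
  "E0 \<beta> \<in> sets borel" "E1 \<beta> \<in> sets borel" "E2 \<beta> \<in> sets borel" "C01 \<beta> \<in> sets borel"
  "C12 \<beta> \<in> sets borel" "C02 \<beta> \<in> sets borel" "C012 \<beta> \<in> sets borel" "Cs \<beta> \<in> sets borel"
  unfolding Cs_def E0_def E1_def E2_def C01_def C12_def C02_def C012_def S_def set_borel_pair
  by measurable

lemma zz_meas: "(\<lambda>p. snd (snd p)) \<in> borel_measurable (X_M \<beta>)"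
proof -
  have "(\<lambda>p. snd (snd p)) \<in> measurable (X_M \<beta>) (S_M \<beta>)" unfolding X_M_def by measurable
  thus ?thesis unfolding S_M_def measurable_restrict_space2_iff by simp
qed

lemma region_pred_gen: "A \<in> sets borel \<Longrightarrow> Measurable.pred (X_M \<beta>) (\<lambda>p. snd (snd p) \<in> A)"
  by (rule pred_sets2[OF _ zz_meas])

lemmas region_preds[measurable] = region_pred_gen[OF regions_borel(1)] region_pred_gen[OF regions_borel(2)]
  region_pred_gen[OF regions_borel(3)] region_pred_gen[OF regions_borel(4)] region_pred_gen[OF regions_borel(5)]
  region_pred_gen[OF regions_borel(6)] region_pred_gen[OF regions_borel(7)] region_pred_gen[OF regions_borel(8)]

lemma fst_X_meas: "fst \<in> measurable (X_M \<beta>) Omega_M" unfolding X_M_def by simp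
lemma fstsnd_X_meas: "(\<lambda>p. fst (snd p)) \<in> measurable (X_M \<beta>) Upsilon_M" unfolding X_M_def by measurable

lemma om0_meas[measurable]: "(\<lambda>p. fst p 0) \<in> measurable (X_M \<beta>) (count_space UNIV)"
proof -
  have "(\<lambda>\<omega>. \<omega> 0) \<in> measurable Omega_M (count_space {0,1})" unfolding Omega_M_def
    by (rule measurable_component_singleton) simp
  from measurable_compose[OF measurable_compose[OF fst_X_meas this] measurable_count_space[of "\<lambda>x. x"]]
  show ?thesis by simp
qed

lemma up0_meas[measurable]: "(\<lambda>p. fst (snd p) 0) \<in> measurable (X_M \<beta>) (count_space UNIV)"
proof -
  have "(\<lambda>\<omega>. \<omega> 0) \<in> measurable Upsilon_M (count_space {0,1,2})" unfolding Upsilon_M_def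
    by (rule measurable_component_singleton) simp
  from measurable_compose[OF measurable_compose[OF fstsnd_X_meas this] measurable_count_space[of "\<lambda>x. x"]]
  show ?thesis by simp
qed

lemma digit_alt: "digit \<beta> = (\<lambda>p. if snd (snd p) \<in> E0 \<beta> then 0
     else if snd (snd p) \<in> E1 \<beta> then 1
     else if snd (snd p) \<in> E2 \<beta> then 2
     else if snd (snd p) \<in> C01 \<beta> then (if fst p 0 = 0 then 0 else 1)
     else if snd (snd p) \<in> C12 \<beta> then (if fst p 0 = 0 then 1 else 2)
     else if snd (snd p) \<in> C02 \<beta> then (if fst p 0 = 0 then 0 else 2)
     else fst (snd p) 0)"
  by (rule ext) (simp only: digit_def split_beta)

lemma digit_meas[measurable]: "digit \<beta> \<in> measurable (X_M \<beta>) (count_space UNIV)"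
  unfolding digit_alt by measurable

lemma to_count: "f \<in> measurable M (count_space UNIV) \<Longrightarrow> f \<in> space M \<rightarrow> A \<Longrightarrow> f \<in> measurable M (count_space A)"
  using measurable_restrict_space2[of f M A "count_space UNIV"] by (simp add: restrict_count_space)

lemma shift_meas: "shift \<in> measurable (PiM UNIV (\<lambda>_. count_space A)) (PiM UNIV (\<lambda>_. count_space A))"
proof -
  have "(\<lambda>\<omega> i. \<omega> (Suc i)) \<in> measurable (PiM UNIV (\<lambda>_. count_space A)) (PiM UNIV (\<lambda>_. count_space A))"
    by (rule measurable_PiM_single') (auto simp: space_PiM PiE_def Pi_def)
  thus ?thesis by (simp add: shift_def[abs_def])
qed

lemma K_meas: assumes b: "1 < \<beta>" "\<beta> \<le> 3/2" shows "K \<beta> \<in> measurable (X_M \<beta>) (X_M \<beta>)"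
proof -
  have Kalt: "K \<beta> = (\<lambda>p. (if snd (snd p) \<in> Cs \<beta> then shift (fst p) else fst p,
      if snd (snd p) \<in> C012 \<beta> then shift (fst (snd p)) else fst (snd p),
      \<beta> *\<^sub>R snd (snd p) - qv (digit \<beta> p)))"
    by (rule ext) (simp only: K_def split_beta)
  have m1: "(\<lambda>p. if snd (snd p) \<in> Cs \<beta> then shift (fst p) else fst p) \<in> measurable (X_M \<beta>) Omega_M"
  proof (rule measurable_If)
    show "(\<lambda>p. shift (fst p)) \<in> measurable (X_M \<beta>) Omega_M"
      unfolding X_M_def Omega_M_def by (rule measurable_compose[OF measurable_fst shift_meas])
    show "fst \<in> measurable (X_M \<beta>) Omega_M" unfolding X_M_def by simp
    show "{p \<in> space (X_M \<beta>). snd (snd p) \<in> Cs \<beta>} \<in> sets (X_M \<beta>)" using region_preds(8) by (simp add: pred_def)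
  qed
  have m2: "(\<lambda>p. if snd (snd p) \<in> C012 \<beta> then shift (fst (snd p)) else fst (snd p)) \<in> measurable (X_M \<beta>) Upsilon_M"
  proof (rule measurable_If)
    show "(\<lambda>p. shift (fst (snd p))) \<in> measurable (X_M \<beta>) Upsilon_M"
      unfolding X_M_def Upsilon_M_def by (rule measurable_compose[OF _ shift_meas]) measurable
    show "(\<lambda>p. fst (snd p)) \<in> measurable (X_M \<beta>) Upsilon_M" unfolding X_M_def by measurable
    show "{p \<in> space (X_M \<beta>). snd (snd p) \<in> C012 \<beta>} \<in> sets (X_M \<beta>)" using region_preds(7) by (simp add: pred_def)
  qed
  have qvm: "qv \<in> measurable (count_space UNIV) borel" by simp
  have m3b: "(\<lambda>p. \<beta> *\<^sub>R snd (snd p) - qv (digit \<beta> p)) \<in> borel_measurable (X_M \<beta>)"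
    using zz_meas measurable_compose[OF digit_meas qvm] by measurable
  have m3: "(\<lambda>p. \<beta> *\<^sub>R snd (snd p) - qv (digit \<beta> p)) \<in> measurable (X_M \<beta>) (S_M \<beta>)"
    unfolding S_M_def
  proof (rule measurable_restrict_space2[OF _ m3b])
    show "(\<lambda>p. \<beta> *\<^sub>R snd (snd p) - qv (digit \<beta> p)) \<in> space (X_M \<beta>) \<rightarrow> S \<beta>"
    proof
      fix p assume "p \<in> space (X_M \<beta>)"
      then obtain \<omega> \<upsilon> z where p: "p = (\<omega>, \<upsilon>, z)" "z \<in> S \<beta>" by (cases p) (auto simp: space_X)
      show "\<beta> *\<^sub>R snd (snd p) - qv (digit \<beta> p) \<in> S \<beta>" using step_S[OF b p(2)] p by simp
    qed
  qed
  show ?thesis unfolding Kalt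
    unfolding X_M_def[of \<beta>] using m1 m2 m3 unfolding X_M_def by measurable
qed

lemma phi_meas: assumes b: "1 < \<beta>" "\<beta> \<le> 3/2" shows "phi \<beta> \<in> measurable (X_M \<beta>) Upsilon_M"
proof -
  have "(\<lambda>p n. digit \<beta> ((K \<beta> ^^ n) p)) \<in> measurable (X_M \<beta>) Upsilon_M"
    unfolding Upsilon_M_def
  proof (rule measurable_PiM_single')
    fix n
    show "(\<lambda>p. digit \<beta> ((K \<beta> ^^ n) p)) \<in> measurable (X_M \<beta>) (count_space {0,1,2})"
    proof (rule to_count)
      show "(\<lambda>p. digit \<beta> ((K \<beta> ^^ n) p)) \<in> measurable (X_M \<beta>) (count_space UNIV)"
        by (rule measurable_compose[OF measurable_compose_n[OF K_meas[OF b]] digit_meas])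
      show "(\<lambda>p. digit \<beta> ((K \<beta> ^^ n) p)) \<in> space (X_M \<beta>) \<rightarrow> {0,1,2}"
      proof
        fix p assume p: "p \<in> space (X_M \<beta>)"
        obtain \<omega> \<upsilon> z where pp: "p = (\<omega>, \<upsilon>, z)" by (cases p) auto
        show "digit \<beta> ((K \<beta> ^^ n) p) \<in> {0,1,2}" using phi_range[of \<omega> \<upsilon> z \<beta> n] p pp by (simp add: phi_def)
      qed
    qed
  next
    show "(\<lambda>p n. digit \<beta> ((K \<beta> ^^ n) p)) \<in> space (X_M \<beta>) \<rightarrow> (\<Pi>\<^sub>E i\<in>UNIV. space (count_space {0,1,2}))"
    proof
      fix p assume p: "p \<in> space (X_M \<beta>)"
      show "(\<lambda>n. digit \<beta> ((K \<beta> ^^ n) p)) \<in> (\<Pi>\<^sub>E i\<in>UNIV. space (count_space {0,1,2}))"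
        using phi_space[OF p] unfolding phi_def Upsilon_M_def space_PiM by simp
    qed
  qed
  thus ?thesis by (simp add: phi_def[abs_def])
qed




lemma coord_meas[measurable]: "(\<lambda>b. b j) \<in> measurable Upsilon_M (count_space UNIV)"
proof -
  have "(\<lambda>\<omega>. \<omega> j) \<in> measurable Upsilon_M (count_space {0,1,2})" unfolding Upsilon_M_def
    by (rule measurable_component_singleton) simp
  from measurable_compose[OF this measurable_count_space[of "\<lambda>x. x"]]
  show ?thesis by simp
qed

lemma qv_coord_meas[measurable]: "(\<lambda>b. qv (b j)) \<in> borel_measurable Upsilon_M"
proof -
  have qvm: "qv \<in> measurable (count_space UNIV) borel" by simp
  show ?thesis by (rule measurable_compose[OF coord_meas qvm])
qed

lemma W_meas[measurable]: "(\<lambda>b. W \<beta> b j) \<in> borel_measurable Upsilon_M"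
  unfolding W_def by measurable

lemma W_pred: "A \<in> sets borel \<Longrightarrow> Measurable.pred Upsilon_M (\<lambda>b. W \<beta> b t \<in> A)"
  by (rule pred_sets2[OF _ W_meas])

lemmas W_preds[measurable] = W_pred[OF regions_borel(4)] W_pred[OF regions_borel(5)]
  W_pred[OF regions_borel(7)] W_pred[OF regions_borel(8)]

lemma cnt_meas:
  assumes "\<And>i. Measurable.pred M (P i)"
  shows "(\<lambda>x. cnt (\<lambda>i. P i x) n) \<in> measurable M (count_space UNIV)"
proof (induction n)
  case 0 thus ?case by simp
next
  case (Suc n)
  have "(\<lambda>x. if P n x then Suc (cnt (\<lambda>i. P i x) n) else cnt (\<lambda>i. P i x) n) \<in> measurable M (count_space UNIV)"
  proof (rule measurable_If)
    show "(\<lambda>x. Suc (cnt (\<lambda>i. P i x) n)) \<in> measurable M (count_space UNIV)"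
      by (rule measurable_compose[OF Suc.IH measurable_count_space])
    show "(\<lambda>x. cnt (\<lambda>i. P i x) n) \<in> measurable M (count_space UNIV)" by (rule Suc.IH)
    show "{x \<in> space M. P n x} \<in> sets M" using assms[of n] by (simp add: pred_def)
  qed
  thus ?case by simp
qed

lemma cntC_meas[measurable]: "(\<lambda>b. cnt (\<lambda>i. W \<beta> b i \<in> Cs \<beta>) n) \<in> measurable Upsilon_M (count_space UNIV)"
  by (rule cnt_meas[where M=Upsilon_M and P="\<lambda>i b. W \<beta> b i \<in> Cs \<beta>"]) measurable

lemma cnt012_meas[measurable]: "(\<lambda>b. cnt (\<lambda>i. W \<beta> b i \<in> C012 \<beta>) n) \<in> measurable Upsilon_M (count_space UNIV)"
  by (rule cnt_meas[where M=Upsilon_M and P="\<lambda>i b. W \<beta> b i \<in> C012 \<beta>"]) measurable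

lemma letter_meas: "(\<lambda>b. letter \<beta> (W \<beta> b t) (b t)) \<in> measurable Upsilon_M (count_space UNIV)"
  unfolding letter_def by measurable

lemma omG_meas: "omG \<beta> \<in> measurable Upsilon_M Omega_M"
proof -
  have c: "(\<lambda>b. omG \<beta> b k) \<in> measurable Upsilon_M (count_space {0,1})" for k
  proof (rule to_count)
    have L: "(\<lambda>b. LEAST t. W \<beta> b t \<in> Cs \<beta> \<and> cnt (\<lambda>i. W \<beta> b i \<in> Cs \<beta>) t = k) \<in> measurable Upsilon_M (count_space UNIV)"
      by measurable
    show "(\<lambda>b. omG \<beta> b k) \<in> measurable Upsilon_M (count_space UNIV)"
      unfolding omG_def Let_def by (rule measurable_compose_countable[OF letter_meas L])
    show "(\<lambda>b. omG \<beta> b k) \<in> space Upsilon_M \<rightarrow> {0,1}"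
      using letter_range by (simp add: omG_def Let_def)
  qed
  have r: "(\<lambda>b k. omG \<beta> b k) \<in> space Upsilon_M \<rightarrow> (\<Pi>\<^sub>E i\<in>UNIV. space (count_space {0,1}))"
    using letter_range by (simp add: omG_def Let_def PiE_def Pi_def)
  have "(\<lambda>b k. omG \<beta> b k) \<in> measurable Upsilon_M (PiM UNIV (\<lambda>_. count_space {0,1}))"
    by (rule measurable_PiM_single'[OF c r])
  thus ?thesis by (simp add: Omega_M_def)
qed

lemma upG_meas: "upG \<beta> \<in> measurable Upsilon_M Upsilon_M"
proof -
  have c: "(\<lambda>b. upG \<beta> b k) \<in> measurable Upsilon_M (count_space {0,1,2})" for k
  proof (rule to_count)
    have L: "(\<lambda>b. LEAST t. W \<beta> b t \<in> C012 \<beta> \<and> cnt (\<lambda>i. W \<beta> b i \<in> C012 \<beta>) t = k) \<in> measurable Upsilon_M (count_space UNIV)"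
      by measurable
    show "(\<lambda>b. upG \<beta> b k) \<in> measurable Upsilon_M (count_space UNIV)"
      unfolding upG_def by (rule measurable_compose_countable[OF coord_meas L])
    show "(\<lambda>b. upG \<beta> b k) \<in> space Upsilon_M \<rightarrow> {0,1,2}"
      by (auto simp: upG_def space_Upsilon)
  qed
  have r: "(\<lambda>b k. upG \<beta> b k) \<in> space Upsilon_M \<rightarrow> (\<Pi>\<^sub>E i\<in>UNIV. space (count_space {0,1,2}))"
  proof
    fix b assume "b \<in> space Upsilon_M"
    hence "b \<in> (\<Pi>\<^sub>E i\<in>UNIV. space (count_space {0,1,2}))" by (simp add: Upsilon_M_def space_PiM)
    thus "(\<lambda>k. upG \<beta> b k) \<in> (\<Pi>\<^sub>E i\<in>UNIV. space (count_space {0,1,2}))"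
      unfolding upG_def by (auto simp: PiE_iff)
  qed
  have "(\<lambda>b k. upG \<beta> b k) \<in> measurable Upsilon_M (PiM UNIV (\<lambda>_. count_space {0,1,2}))"
    by (rule measurable_PiM_single'[OF c r])
  thus ?thesis unfolding Upsilon_M_def by simp
qed

lemma G_meas: assumes b: "1 < \<beta>" shows "G \<beta> \<in> measurable Upsilon_M (X_M \<beta>)"
proof -
  have w: "(\<lambda>b. W \<beta> b 0) \<in> measurable Upsilon_M (S_M \<beta>)"
    unfolding S_M_def by (rule measurable_restrict_space2) (use W_S[OF b] W_meas in auto)
  have "(\<lambda>b. (omG \<beta> b, upG \<beta> b, W \<beta> b 0)) \<in> measurable Upsilon_M (X_M \<beta>)"
    unfolding X_M_def using omG_meas upG_meas w by measurable
  thus ?thesis by (simp add: G_def[abs_def])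
qed




theorem lemma4p4:
  fixes \<beta> :: real
  assumes "1 < \<beta>" and "\<beta> \<le> 3/2"
  shows "bij_betw (phi \<beta>) (Z \<beta>) (D \<beta>)
       \<and> phi \<beta> \<in> measurable (restrict_space (X_M \<beta>) (Z \<beta>)) (restrict_space Upsilon_M (D \<beta>))
       \<and> the_inv_into (Z \<beta>) (phi \<beta>)
           \<in> measurable (restrict_space Upsilon_M (D \<beta>)) (restrict_space (X_M \<beta>) (Z \<beta>))"
proof (intro conjI)
  note b = assms
  show bij: "bij_betw (phi \<beta>) (Z \<beta>) (D \<beta>)" by (rule phi_bij[OF b])
  show "phi \<beta> \<in> measurable (restrict_space (X_M \<beta>) (Z \<beta>)) (restrict_space Upsilon_M (D \<beta>))"
    by (rule measurable_restrict_space3[OF phi_meas[OF b]]) (use phi_D[OF b] in auto)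
  have Gm: "G \<beta> \<in> measurable (restrict_space Upsilon_M (D \<beta>)) (restrict_space (X_M \<beta>) (Z \<beta>))"
    by (rule measurable_restrict_space3[OF G_meas[OF b(1)]]) (use G_Z[OF b] in auto)
  have inj: "inj_on (phi \<beta>) (Z \<beta>)" using bij by (simp add: bij_betw_def)
  show "the_inv_into (Z \<beta>) (phi \<beta>) \<in> measurable (restrict_space Upsilon_M (D \<beta>)) (restrict_space (X_M \<beta>) (Z \<beta>))"
  proof (subst measurable_cong)
    fix w assume "w \<in> space (restrict_space Upsilon_M (D \<beta>))"
    hence wD: "w \<in> D \<beta>" by (simp add: space_restrict_space)
    show "the_inv_into (Z \<beta>) (phi \<beta>) w = G \<beta> w"
      by (rule the_inv_into_f_eq[OF inj G_Z(2)[OF b wD] G_Z(1)[OF b wD]])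
  qed (rule Gm)
qed


end
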